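(* Let $X_1$ be a real random variable with c.d.f. $F$ and mean $\mu$. Let $0<a<b<1$ and $\xi:=1-(b-a)$. Let $p>1$ be such that $\nu_p<+\infty$. Then \[|\mu-\mu^{(a,b)}|\leq\frac{\nu_p\,\rho_{F,p}(\xi)\,\xi^{\frac{p-1}{p}}}{1-\xi}.\]
   Context: $\nu_p:=(\mathbb{E}|X_1-\mu|^p)^{1/p}$. $F^{-1}(q):=\inf\{t:F(t)\ge q\}$ is the quantile transform. $\mu^{(a,b)}:=\frac{1}{b-a}\int_a^bF^{-1}(u)\,du$. For $\xi>0$, $\rho_{F,p}(\xi):=\sup\{(\mathbb{E}[|X_1-\mu|^pZ])^{1/p}/\nu_p: 0\le Z\le1 \text{ a random variable (defined jointly with }X_1), \mathbb{E}Z\le\xi\}$ if $\nu_p>0$, and $\rho_{F,p}(\xi)=0$ if $\nu_p=0$. *)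

theory Defs
  imports "HOL-Probability.Probability"
begin

definition cdfX :: "'a measure \<Rightarrow> ('a \<Rightarrow> real) \<Rightarrow> real \<Rightarrow> real" where
  "cdfX M X = cdf (distr M borel X)"

definition quantile :: "(real \<Rightarrow> real) \<Rightarrow> real \<Rightarrow> real" where
  "quantile F q = Inf {t. F t \<ge> q}"

definition trimmed_mean :: "(real \<Rightarrow> real) \<Rightarrow> real \<Rightarrow> real \<Rightarrow> real" where
  "trimmed_mean F a b = (1 / (b - a)) * (LBINT u=a..b. quantile F u)"

definition nu :: "'a measure \<Rightarrow> ('a \<Rightarrow> real) \<Rightarrow> real \<Rightarrow> real" where
  "nu M X p = (\<integral>x. \<bar>X x - (\<integral>y. X y \<partial>M)\<bar> powr p \<partial>M) powr (1 / p)"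

definition rho :: "'a measure \<Rightarrow> ('a \<Rightarrow> real) \<Rightarrow> real \<Rightarrow> real \<Rightarrow> real" where
  "rho M X p \<xi> = (if nu M X p = 0 then 0 else
     Sup {(\<integral>x. \<bar>X x - (\<integral>y. X y \<partial>M)\<bar> powr p * Z x \<partial>M) powr (1 / p) / nu M X p | Z.
            Z \<in> borel_measurable M \<and> (\<forall>x\<in>space M. 0 \<le> Z x \<and> Z x \<le> 1) \<and>
            (\<integral>x. Z x \<partial>M) \<le> \<xi>})"

end

theory Submission
  imports Defs
begin

lemma young_pt:
  fixes y K p :: real
  assumes "y \<ge> 0" "K > 0" "p > 1"
  shows "y \<le> y powr p / (p * K powr (p - 1)) + K * (p - 1) / p"
proof -
  define q where "q = p / (p - 1)"
  have q1: "q > 1" using assms unfolding q_def by (simp add: field_simps)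
  have pq: "1/p + 1/q = 1" using assms unfolding q_def by (simp add: field_simps)
  define c where "c = K powr ((p - 1) / p)"
  have c0: "c > 0" using assms unfolding c_def by simp
  have "(y / c) * c \<le> (y / c) powr p / p + c powr q / q"
    by (rule Youngs_inequality) (use assms q1 pq c0 in auto)
  moreover have "(y / c) * c = y" using c0 by simp
  moreover have "(y / c) powr p = y powr p / K powr (p - 1)"
    using assms c0 unfolding c_def by (simp add: powr_divide powr_powr)
  moreover have "c powr q = K"
    using assms unfolding c_def q_def by (simp add: powr_powr)
  moreover have "K / q = K * (p - 1) / p" unfolding q_def by simp
  ultimately show ?thesis by (simp add: field_simps)
qed



lemma holder_w:
  fixes M :: "'b measure" and f w :: "'b \<Rightarrow> real" and p :: real
  assumes p: "p > 1"
    and f0: "\<And>x. x \<in> space M \<Longrightarrow> f x \<ge> 0" and w0: "\<And>x. x \<in> space M \<Longrightarrow> w x \<ge> 0"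
    and i1: "integrable M (\<lambda>x. f x * w x)" and i2: "integrable M (\<lambda>x. f x powr p * w x)"
    and i3: "integrable M w"
  shows "(\<integral>x. f x * w x \<partial>M) \<le> (\<integral>x. f x powr p * w x \<partial>M) powr (1 / p) * (\<integral>x. w x \<partial>M) powr ((p - 1) / p)"
proof -
  define S where "S = (\<integral>x. f x powr p * w x \<partial>M)"
  define W where "W = (\<integral>x. w x \<partial>M)"
  have S0: "S \<ge> 0" unfolding S_def using f0 w0 by (intro Bochner_Integration.integral_nonneg) auto
  have W0: "W \<ge> 0" unfolding W_def using w0 by (intro Bochner_Integration.integral_nonneg) auto
  have rhs0: "S powr (1 / p) * W powr ((p - 1) / p) \<ge> 0" by simp
  show ?thesis
  proof (cases "S = 0 \<or> W = 0")
    case True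
    have "AE x in M. f x * w x = 0"
    proof (cases "S = 0")
      case True
      have "AE x in M. f x powr p * w x = 0"
        using True i2 f0 w0 unfolding S_def
        by (subst integral_nonneg_eq_0_iff_AE[symmetric]) auto
      then show ?thesis
        by eventually_elim (use p in auto)
    next
      case False
      then have "W = 0" using True by auto
      then have "AE x in M. w x = 0"
        using i3 w0 unfolding W_def
        by (subst integral_nonneg_eq_0_iff_AE[symmetric]) auto
      then show ?thesis by eventually_elim auto
    qed
    then have "(\<integral>x. f x * w x \<partial>M) = 0"
      by (simp add: integral_eq_zero_AE)
    then show ?thesis using rhs0 unfolding S_def W_def by simp
  next
    case False
    then have Sp: "S > 0" and Wp: "W > 0" using S0 W0 by auto
    define s where "s = S powr (1 / p)"
    define om where "om = W powr (1 / p)"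
    have sp: "s > 0" and omp: "om > 0" using Sp Wp unfolding s_def om_def by auto
    have Ss: "S = s powr p" unfolding s_def using Sp p by (simp add: powr_powr)
    have Ww: "W = om powr p" unfolding om_def using Wp p by (simp add: powr_powr)
    define K where "K = s / om"
    have Kp: "K > 0" unfolding K_def using sp omp by simp
    have "(\<integral>x. f x * w x \<partial>M) \<le> (\<integral>x. (f x powr p / (p * K powr (p - 1)) + K * (p - 1) / p) * w x \<partial>M)"
    proof (rule integral_mono)
      show "integrable M (\<lambda>x. (f x powr p / (p * K powr (p - 1)) + K * (p - 1) / p) * w x)"
        using i2 i3 by (simp add: distrib_right)
      fix x assume x: "x \<in> space M"
      show "f x * w x \<le> (f x powr p / (p * K powr (p - 1)) + K * (p - 1) / p) * w x"
        using young_pt[OF f0[OF x] Kp p] w0[OF x] by (rule mult_right_mono)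
    qed (use i1 in auto)
    also have "\<dots> = S / (p * K powr (p - 1)) + K * (p - 1) / p * W"
      unfolding S_def W_def using i2 i3
      by (simp add: distrib_right)
    also have "\<dots> = s * om powr (p - 1)"
    proof -
      have "K powr (p - 1) = s powr (p - 1) / om powr (p - 1)"
        unfolding K_def using sp omp by (simp add: powr_divide)
      moreover have "s powr p = s * s powr (p - 1)"
        using sp powr_add[of s 1 "p - 1"] by simp
      moreover have "om powr p = om * om powr (p - 1)"
        using omp powr_add[of om 1 "p - 1"] by simp
      moreover have "s powr (p - 1) > 0" "om powr (p - 1) > 0" using sp omp by auto
      ultimately show ?thesis unfolding Ss Ww K_def using sp omp p
        by (simp add: field_simps)
    qed
    also have "\<dots> = S powr (1 / p) * W powr ((p - 1) / p)"
    proof -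
      have "W powr ((p - 1) / p) = om powr (p - 1)"
        unfolding om_def using Wp p by (simp add: powr_powr)
      then show ?thesis unfolding s_def by simp
    qed
    finally show ?thesis unfolding S_def W_def .
  qed
qed



abbreviation "UI \<equiv> restrict_space lborel {0<..<1::real}"

lemma prob_UI: "prob_space UI"
  by (auto simp: space_restrict_space emeasure_restrict_space intro!: prob_spaceI)

definition twa :: "(real \<Rightarrow> real) \<Rightarrow> real \<Rightarrow> real" where
  "twa Q a = measure UI {u \<in> space UI. u \<le> a \<and> Q u = Q a} / measure UI {u \<in> space UI. Q u = Q a}"

definition twb :: "(real \<Rightarrow> real) \<Rightarrow> real \<Rightarrow> real" where
  "twb Q b = measure UI {u \<in> space UI. b \<le> u \<and> Q u = Q b} / measure UI {u \<in> space UI. Q u = Q b}"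

definition tw :: "(real \<Rightarrow> real) \<Rightarrow> real \<Rightarrow> real \<Rightarrow> real \<Rightarrow> real" where
  "tw Q a b x = indicator {..<Q a} x + indicator {Q b<..} x + twa Q a * indicator {Q a} x + twb Q b * indicator {Q b} x"

lemma tw_borel[measurable]: "tw Q a b \<in> borel_measurable borel"
  unfolding tw_def by measurable

lemma tail_weight:
  fixes Q \<psi> :: "real \<Rightarrow> real" and a b :: real
  assumes mono: "mono_on {0<..<1} Q" and ab: "0 < a" "a < b" "b < 1"
    and Qm[measurable]: "Q \<in> borel_measurable UI"
    and \<psi>m[measurable]: "\<psi> \<in> borel_measurable borel"
    and int: "integrable UI (\<lambda>u. \<psi> (Q u))"
  shows "(\<integral>u. \<psi> (Q u) * tw Q a b (Q u) \<partial>UI) = (\<integral>u. \<psi> (Q u) * (1 - indicator {a<..<b} u) \<partial>UI)"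
proof -
  interpret P: prob_space UI by (rule prob_UI)
  have sp: "space UI = {0<..<1}" by (simp add: space_restrict_space)
  define qa where "qa = Q a"
  define qb where "qb = Q b"
  define B where "B = {u \<in> space UI. Q u < qa \<or> qb < Q u}"
  define La where "La = {u \<in> space UI. Q u = qa}"
  define Lb where "Lb = {u \<in> space UI. Q u = qb}"
  define Ea where "Ea = {u \<in> space UI. u \<le> a \<and> Q u = qa}"
  define Eb where "Eb = {u \<in> space UI. b \<le> u \<and> Q u = qb}"
  define \<alpha> where "\<alpha> = twa Q a"
  define \<beta> where "\<beta> = twb Q b"
  have UIs: "S \<inter> space UI \<in> sets UI" if "S \<in> sets borel" for S
    using that unfolding sets_restrict_space space_restrict_space sets_lborel by auto
  have Qs: "Q -` S \<inter> space UI \<in> sets UI" if "S \<in> sets borel" for S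
    using measurable_sets[OF Qm that] .
  have "B = Q -` ({..<qa} \<union> {qb<..}) \<inter> space UI" unfolding B_def by auto
  then have [measurable]: "B \<in> sets UI" using Qs[of "{..<qa} \<union> {qb<..}"] by simp
  have "La = Q -` {qa} \<inter> space UI" unfolding La_def by auto
  then have [measurable]: "La \<in> sets UI" using Qs by simp
  have "Lb = Q -` {qb} \<inter> space UI" unfolding Lb_def by auto
  then have [measurable]: "Lb \<in> sets UI" using Qs by simp
  have "Ea = (Q -` {qa} \<inter> space UI) \<inter> ({..a} \<inter> space UI)" unfolding Ea_def by auto
  then have [measurable]: "Ea \<in> sets UI" using Qs[of "{qa}"] UIs[of "{..a}"] by (simp add: sets.Int)
  have "Eb = (Q -` {qb} \<inter> space UI) \<inter> ({b..} \<inter> space UI)" unfolding Eb_def by auto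
  then have [measurable]: "Eb \<in> sets UI" using Qs[of "{qb}"] UIs[of "{b..}"] by (simp add: sets.Int)
  have qab: "qa \<le> qb" unfolding qa_def qb_def using ab by (intro mono_onD[OF mono]) auto
  have m1: "Q u \<le> qa" if "u \<in> {0<..<1}" "u \<le> a" for u
    unfolding qa_def using ab that by (intro mono_onD[OF mono]) auto
  have m2: "qb \<le> Q u" if "u \<in> {0<..<1}" "b \<le> u" for u
    unfolding qb_def using ab that by (intro mono_onD[OF mono]) auto
  have m3: "qa \<le> Q u" if "u \<in> {0<..<1}" "a \<le> u" for u
    unfolding qa_def using ab that by (intro mono_onD[OF mono]) auto
  have m4: "Q u \<le> qb" if "u \<in> {0<..<1}" "u \<le> b" for u
    unfolding qb_def using ab that by (intro mono_onD[OF mono]) auto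
  have aE: "\<alpha> * measure UI La = measure UI Ea"
  proof (cases "measure UI La = 0")
    case True
    have "Ea \<subseteq> La" unfolding Ea_def La_def by auto
    then have "measure UI Ea \<le> measure UI La" by (intro P.finite_measure_mono) auto
    then show ?thesis using True measure_nonneg[of UI Ea] by simp
  next
    case False then show ?thesis unfolding \<alpha>_def twa_def La_def Ea_def qa_def by simp
  qed
  have bE: "\<beta> * measure UI Lb = measure UI Eb"
  proof (cases "measure UI Lb = 0")
    case True
    have "Eb \<subseteq> Lb" unfolding Eb_def Lb_def by auto
    then have "measure UI Eb \<le> measure UI Lb" by (intro P.finite_measure_mono) auto
    then show ?thesis using True measure_nonneg[of UI Eb] by simp
  next
    case False then show ?thesis unfolding \<beta>_def twb_def Lb_def Eb_def qb_def by simp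
  qed
  have eq1: "\<psi> (Q u) * tw Q a b (Q u) = \<psi> (Q u) * indicator B u + \<alpha> * \<psi> qa * indicator La u + \<beta> * \<psi> qb * indicator Lb u"
    if u: "u \<in> space UI" for u
    using qab u unfolding tw_def B_def La_def Lb_def \<alpha>_def \<beta>_def qa_def[symmetric] qb_def[symmetric]
    by (auto simp: indicator_def algebra_simps)
  have eq2: "\<psi> (Q u) * (1 - indicator {a<..<b} u) = \<psi> (Q u) * indicator B u + \<psi> qa * indicator Ea u + \<psi> qb * indicator Eb u"
    if u: "u \<in> space UI" for u
  proof -
    have u01: "u \<in> {0<..<1}" using u sp by simp
    consider "u \<le> a" | "a < u \<and> u < b" | "b \<le> u" by linarith
    then show ?thesis
    proof cases
      case 1
      then have "Q u \<le> qa" using m1 u01 by auto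
      then show ?thesis using 1 ab u qab unfolding B_def Ea_def Eb_def
        by (auto simp: indicator_def)
    next
      case 2
      then have "qa \<le> Q u" "Q u \<le> qb" using m3 m4 u01 by auto
      then show ?thesis using 2 ab u qab unfolding B_def Ea_def Eb_def
        by (auto simp: indicator_def)
    next
      case 3
      then have "qb \<le> Q u" using m2 u01 by auto
      then show ?thesis using 3 ab u qab unfolding B_def Ea_def Eb_def
        by (auto simp: indicator_def)
    qed
  qed
  have sub: "La \<inter> {0<..<1} = La" "Lb \<inter> {0<..<1} = Lb" "Ea \<inter> {0<..<1} = Ea" "Eb \<inter> {0<..<1} = Eb"
    unfolding La_def Lb_def Ea_def Eb_def sp by auto
  have iB: "integrable UI (\<lambda>u. \<psi> (Q u) * indicator B u)"
    using integrable_mult_indicator[OF _ int, of B] by (simp add: mult.commute)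
  have "(\<integral>u. \<psi> (Q u) * tw Q a b (Q u) \<partial>UI)
      = (\<integral>u. \<psi> (Q u) * indicator B u + \<alpha> * \<psi> qa * indicator La u + \<beta> * \<psi> qb * indicator Lb u \<partial>UI)"
    using eq1 by (intro Bochner_Integration.integral_cong) auto
  also have "\<dots> = (\<integral>u. \<psi> (Q u) * indicator B u \<partial>UI) + \<alpha> * \<psi> qa * measure UI La + \<beta> * \<psi> qb * measure UI Lb"
    using iB by (simp add: P.emeasure_eq_measure sub)
  also have "\<dots> = (\<integral>u. \<psi> (Q u) * indicator B u \<partial>UI) + \<psi> qa * measure UI Ea + \<psi> qb * measure UI Eb"
    by (simp add: aE[symmetric] bE[symmetric] ac_simps)
  also have "\<dots> = (\<integral>u. \<psi> (Q u) * indicator B u + \<psi> qa * indicator Ea u + \<psi> qb * indicator Eb u \<partial>UI)"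
    using iB by (simp add: P.emeasure_eq_measure sub)
  also have "\<dots> = (\<integral>u. \<psi> (Q u) * (1 - indicator {a<..<b} u) \<partial>UI)"
    using eq2 by (intro Bochner_Integration.integral_cong) auto
  finally show ?thesis .
qed



lemma UI_sets1: "(Q::real\<Rightarrow>real) \<in> borel_measurable UI \<Longrightarrow> {u \<in> space UI. Q u = c} \<in> sets UI"
proof -
  assume Qm: "Q \<in> borel_measurable UI"
  have "{u \<in> space UI. Q u = c} = Q -` {c} \<inter> space UI" by auto
  moreover have "{c} \<in> sets borel" by (intro borel_closed) simp
  ultimately show ?thesis using measurable_sets[OF Qm, of "{c}"] by simp
qed

lemma UI_sets2: "(Q::real\<Rightarrow>real) \<in> borel_measurable UI \<Longrightarrow> S \<in> sets borel \<Longrightarrow> {u \<in> space UI. u \<in> S \<and> Q u = c} \<in> sets UI"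
proof -
  assume Qm: "Q \<in> borel_measurable UI" and S: "S \<in> sets borel"
  have "{u \<in> space UI. u \<in> S \<and> Q u = c} = (Q -` {c} \<inter> space UI) \<inter> (S \<inter> space UI)" by auto
  moreover have "S \<inter> space UI \<in> sets UI"
    using S unfolding sets_restrict_space space_restrict_space sets_lborel by auto
  moreover have "{c} \<in> sets borel" by (intro borel_closed) simp
  ultimately show ?thesis using measurable_sets[OF Qm, of "{c}"] by (metis sets.Int)
qed

lemma tw_bounds:
  fixes Q :: "real \<Rightarrow> real" and a b :: real
  assumes mono: "mono_on {0<..<1} Q" and ab: "0 < a" "a < b" "b < 1"
    and Qm: "Q \<in> borel_measurable UI"
  shows "0 \<le> tw Q a b x \<and> tw Q a b x \<le> 1"
proof -
  interpret P: prob_space UI by (rule prob_UI)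
  define La where "La = {u \<in> space UI. Q u = Q a}"
  define Lb where "Lb = {u \<in> space UI. Q u = Q b}"
  define Ea where "Ea = {u \<in> space UI. u \<in> {..a} \<and> Q u = Q a}"
  define Eb where "Eb = {u \<in> space UI. u \<in> {b..} \<and> Q u = Q b}"
  have ms: "La \<in> sets UI" "Lb \<in> sets UI" "Ea \<in> sets UI" "Eb \<in> sets UI"
    unfolding La_def Lb_def using UI_sets1[OF Qm] apply auto[2]
    unfolding Ea_def Eb_def using UI_sets2[OF Qm, of "{..a}" "Q a"] UI_sets2[OF Qm, of "{b..}" "Q b"]
    by auto
  have ta: "twa Q a = measure UI Ea / measure UI La" unfolding twa_def Ea_def La_def by simp
  have tb: "twb Q b = measure UI Eb / measure UI Lb" unfolding twb_def Eb_def Lb_def by simp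
  have EaLa: "measure UI Ea \<le> measure UI La"
    using ms by (intro P.finite_measure_mono) (auto simp: Ea_def La_def)
  have EbLb: "measure UI Eb \<le> measure UI Lb"
    using ms by (intro P.finite_measure_mono) (auto simp: Eb_def Lb_def)
  have ra: "\<lbrakk>0 \<le> e; e \<le> l\<rbrakk> \<Longrightarrow> 0 \<le> e / l \<and> e / l \<le> (1::real)" for e l
    by (cases "l = 0") auto
  have a01: "0 \<le> twa Q a \<and> twa Q a \<le> 1" unfolding ta using ra EaLa by simp
  have b01: "0 \<le> twb Q b \<and> twb Q b \<le> 1" unfolding tb using ra EbLb by simp
  have qab: "Q a \<le> Q b" using ab by (intro mono_onD[OF mono]) auto
  have sum1: "twa Q a + twb Q b \<le> 1" if eq: "Q a = Q b"
  proof -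
    have LL: "Lb = La" unfolding La_def Lb_def eq ..
    have dis: "Ea \<inter> Eb = {}" unfolding Ea_def Eb_def using ab by auto
    have "measure UI Ea + measure UI Eb = measure UI (Ea \<union> Eb)"
      using ms dis by (simp add: P.finite_measure_Union)
    also have "\<dots> \<le> measure UI La"
      using ms by (intro P.finite_measure_mono) (auto simp: Ea_def Eb_def La_def eq)
    finally have "measure UI Ea + measure UI Eb \<le> measure UI La" .
    then have "(measure UI Ea + measure UI Eb) / measure UI La \<le> 1"
      using ra[of "measure UI Ea + measure UI Eb" "measure UI La"] by simp
    then show ?thesis unfolding ta tb LL by (simp add: add_divide_distrib)
  qed
  show ?thesis
  proof (cases "Q a = Q b")
    case True
    then show ?thesis using a01 b01 sum1 unfolding tw_def by (auto simp: indicator_def)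
  next
    case False
    then have "Q a < Q b" using qab by simp
    then show ?thesis using a01 b01 unfolding tw_def by (auto simp: indicator_def)
  qed
qed



theorem proposition4p1:
  fixes M :: "'a measure" and X :: "'a \<Rightarrow> real" and a b p :: real
  assumes "prob_space M"
    and "X \<in> borel_measurable M"
    and "integrable M X"
    and "0 < a" and "a < b" and "b < 1"
    and "p > 1"
    and "integrable M (\<lambda>x. \<bar>X x - (\<integral>y. X y \<partial>M)\<bar> powr p)"
  shows "\<bar>(\<integral>x. X x \<partial>M) - trimmed_mean (cdfX M X) a b\<bar>
     \<le> nu M X p * rho M X p (1 - (b - a)) * (1 - (b - a)) powr ((p - 1) / p) / (1 - (1 - (b - a)))"
proof -
  interpret M: prob_space M by fact
  interpret P: prob_space UI by (rule prob_UI)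
  note Xm[measurable] = assms(2)
  have ab: "0 < a" "a < b" "b < 1" and p: "p > 1" using assms by auto
  define N where "N = distr M borel X"
  have rdN: "real_distribution N" unfolding N_def using Xm by simp
  interpret N: cdf_distribution N unfolding cdf_distribution_def by (rule rdN)
  define Q where "Q = quantile (cdfX M X)"
  have Qeq: "Q = (\<lambda>\<omega>. Inf {x. \<omega> \<le> cdf N x})"
    unfolding Q_def quantile_def cdfX_def N_def by simp
  have sUI: "sets UI = sets (restrict_space borel {0<..<1::real})"
    by (rule sets_restrict_space_cong) simp
  have Qm[measurable]: "Q \<in> borel_measurable UI"
    using N.measurable_CI unfolding Qeq by (subst measurable_cong_sets[OF sUI refl])
  have mono: "mono_on {0<..<1} Q" using N.mono_I unfolding Qeq .
  have dist: "distr UI borel Q = N" using N.distr_I_eq_M unfolding Qeq .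
  have transfer: "(\<integral>u. \<psi> (Q u) \<partial>UI) = (\<integral>x. \<psi> (X x) \<partial>M)" if [measurable]: "\<psi> \<in> borel_measurable borel" for \<psi> :: "real \<Rightarrow> real"
  proof -
    have "(\<integral>u. \<psi> (Q u) \<partial>UI) = integral\<^sup>L N \<psi>"
      unfolding dist[symmetric] by (rule integral_distr[OF Qm that, symmetric])
    also have "\<dots> = (\<integral>x. \<psi> (X x) \<partial>M)"
      unfolding N_def by (rule integral_distr[OF Xm that])
    finally show ?thesis .
  qed
  have transferI: "integrable UI (\<lambda>u. \<psi> (Q u)) \<longleftrightarrow> integrable M (\<lambda>x. \<psi> (X x))"
    if [measurable]: "\<psi> \<in> borel_measurable borel" for \<psi> :: "real \<Rightarrow> real"
  proof -
    have "integrable UI (\<lambda>u. \<psi> (Q u)) \<longleftrightarrow> integrable N \<psi>"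
      unfolding dist[symmetric] by (rule integrable_distr_eq[OF Qm that, symmetric])
    also have "\<dots> \<longleftrightarrow> integrable M (\<lambda>x. \<psi> (X x))"
      unfolding N_def by (rule integrable_distr_eq[OF Xm that])
    finally show ?thesis .
  qed
  define \<mu> where "\<mu> = (\<integral>x. X x \<partial>M)"
  define \<phi> where "\<phi> x = \<bar>x - \<mu>\<bar> powr p" for x
  have \<phi>m[measurable]: "\<phi> \<in> borel_measurable borel" unfolding \<phi>_def by measurable
  have \<phi>0: "\<phi> x \<ge> 0" for x unfolding \<phi>_def by simp
  have intQ: "integrable UI Q" using transferI[of "\<lambda>x. x"] assms(3) by simp
  have int\<phi>X: "integrable M (\<lambda>x. \<phi> (X x))" using assms(8) unfolding \<phi>_def \<mu>_def .
  have int\<phi>Q: "integrable UI (\<lambda>u. \<phi> (Q u))" using transferI[OF \<phi>m] int\<phi>X by simp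
  have EQ: "(\<integral>u. Q u \<partial>UI) = \<mu>" using transfer[of "\<lambda>x. x"] unfolding \<mu>_def by simp
  have sp: "space UI = {0<..<1}" by (simp add: space_restrict_space)
  have Iab: "{a<..<b} \<in> sets UI"
  proof -
    have "{a<..<b} = {a<..<b} \<inter> space UI" using ab sp by auto
    also have "\<dots> \<in> sets UI" unfolding sets_restrict_space space_restrict_space sets_lborel by auto
    finally show ?thesis .
  qed
  have mIab: "measure UI {a<..<b} = b - a"
    using ab by (subst measure_restrict_space) auto
  define w :: "real \<Rightarrow> real" where "w u = 1 - indicator {a<..<b} u" for u
  have w01: "0 \<le> w u" "w u \<le> 1" for u unfolding w_def by (auto simp: indicator_def)
  have intw: "integrable UI (\<lambda>u. g u * w u)" if g: "integrable UI g" for g :: "real \<Rightarrow> real"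
  proof -
    have "integrable UI (\<lambda>u. g u - indicator {a<..<b} u *\<^sub>R g u)"
      using g integrable_mult_indicator[OF Iab g] by auto
    then show ?thesis unfolding w_def by (simp add: algebra_simps)
  qed
  have intW: "integrable UI w" using intw[of "\<lambda>_. 1"] by simp
  have mm: "max a 0 = a" "min b 1 = b" using ab by auto
  have P01: "measure UI {0<..<1} = 1" using P.prob_space sp by simp
  have Ew: "(\<integral>u. w u \<partial>UI) = 1 - (b - a)"
    unfolding w_def using Iab mIab mm P01 by (simp add: P.emeasure_eq_measure)
  have LB: "(LBINT u=a..b. Q u) = (\<integral>u. Q u * indicator {a<..<b} u \<partial>UI)"
  proof -
    have "(LBINT u=a..b. Q u) = (\<integral>u. indicator {a<..<b} u *\<^sub>R Q u \<partial>lborel)"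
      using ab by (simp add: interval_lebesgue_integral_def set_lebesgue_integral_def)
    also have "\<dots> = (\<integral>u. indicator {0<..<1} u *\<^sub>R (Q u * indicator {a<..<b} u) \<partial>lborel)"
      using ab by (intro Bochner_Integration.integral_cong) (auto simp: indicator_def)
    also have "\<dots> = (\<integral>u. Q u * indicator {a<..<b} u \<partial>UI)"
      by (rule integral_restrict_space[symmetric]) simp
    finally show ?thesis .
  qed
  define mab where "mab = trimmed_mean (cdfX M X) a b"
  have mab: "(b - a) * mab = (\<integral>u. Q u * indicator {a<..<b} u \<partial>UI)"
  proof -
    have "mab = 1 / (b - a) * (LBINT u=a..b. Q u)" unfolding mab_def trimmed_mean_def Q_def ..
    then show ?thesis unfolding LB using ab by simp
  qed
  have key: "(b - a) * (\<mu> - mab) = (\<integral>u. (Q u - \<mu>) * w u \<partial>UI)"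
  proof -
    have iQI: "integrable UI (\<lambda>u. Q u * indicator {a<..<b} u)"
      using integrable_mult_indicator[OF Iab intQ] by (simp add: mult.commute)
    have "(\<integral>u. (Q u - \<mu>) * w u \<partial>UI) = (\<integral>u. (Q u - \<mu>) - (Q u * indicator {a<..<b} u - \<mu> * indicator {a<..<b} u) \<partial>UI)"
      unfolding w_def by (intro Bochner_Integration.integral_cong) (auto simp: algebra_simps)
    also have "\<dots> = ((\<integral>u. Q u \<partial>UI) - \<mu>) - ((\<integral>u. Q u * indicator {a<..<b} u \<partial>UI) - \<mu> * measure UI {a<..<b})"
      using intQ iQI Iab mm P01 by (simp add: P.emeasure_eq_measure algebra_simps)
    also have "\<dots> = (b - a) * (\<mu> - mab)"
      unfolding EQ mIab mab[symmetric] by (simp add: algebra_simps)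
    finally show ?thesis by simp
  qed
  define \<xi> where "\<xi> = 1 - (b - a)"
  define T where "T = (\<integral>u. \<phi> (Q u) * w u \<partial>UI) powr (1 / p)"
  have T0: "T \<ge> 0" unfolding T_def by simp
  have hold: "(b - a) * \<bar>\<mu> - mab\<bar> \<le> T * \<xi> powr ((p - 1) / p)"
  proof -
    have iA: "integrable UI (\<lambda>u. \<bar>Q u - \<mu>\<bar>)" using intQ by auto
    have "(b - a) * \<bar>\<mu> - mab\<bar> = \<bar>\<integral>u. (Q u - \<mu>) * w u \<partial>UI\<bar>"
    proof -
      have "\<bar>(b - a) * (\<mu> - mab)\<bar> = (b - a) * \<bar>\<mu> - mab\<bar>" using ab by (simp add: abs_mult)
      then show ?thesis unfolding key by simp
    qed
    also have "\<dots> \<le> (\<integral>u. \<bar>Q u - \<mu>\<bar> * w u \<partial>UI)"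
    proof -
      have "\<bar>\<integral>u. (Q u - \<mu>) * w u \<partial>UI\<bar> \<le> (\<integral>u. \<bar>(Q u - \<mu>) * w u\<bar> \<partial>UI)"
        by (rule integral_abs_bound)
      also have "\<dots> = (\<integral>u. \<bar>Q u - \<mu>\<bar> * w u \<partial>UI)"
        using w01 by (intro Bochner_Integration.integral_cong) (auto simp: abs_mult)
      finally show ?thesis .
    qed
    also have "\<dots> \<le> (\<integral>u. \<bar>Q u - \<mu>\<bar> powr p * w u \<partial>UI) powr (1 / p) * (\<integral>u. w u \<partial>UI) powr ((p - 1) / p)"
      by (rule holder_w[OF p]) (use w01 intw[OF iA] intw[OF int\<phi>Q[unfolded \<phi>_def]] intW in auto)
    also have "\<dots> = T * \<xi> powr ((p - 1) / p)"
      unfolding T_def \<xi>_def Ew \<phi>_def ..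
    finally show ?thesis .
  qed
  define Z where "Z x = tw Q a b (X x)" for x
  have Zm[measurable]: "Z \<in> borel_measurable M" unfolding Z_def by measurable
  have Z01: "0 \<le> Z x \<and> Z x \<le> 1" for x unfolding Z_def using tw_bounds[OF mono ab Qm] .
  have EZ: "(\<integral>x. Z x \<partial>M) = \<xi>"
  proof -
    have "(\<integral>x. Z x \<partial>M) = (\<integral>u. 1 * tw Q a b (Q u) \<partial>UI)"
      unfolding Z_def using transfer[of "tw Q a b"] by simp
    also have "\<dots> = (\<integral>u. 1 * w u \<partial>UI)"
      unfolding w_def by (rule tail_weight[OF mono ab Qm]) auto
    finally show ?thesis using Ew unfolding \<xi>_def by simp
  qed
  have E\<phi>Z: "(\<integral>x. \<phi> (X x) * Z x \<partial>M) = (\<integral>u. \<phi> (Q u) * w u \<partial>UI)"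
  proof -
    have "(\<integral>x. \<phi> (X x) * Z x \<partial>M) = (\<integral>u. \<phi> (Q u) * tw Q a b (Q u) \<partial>UI)"
      unfolding Z_def using transfer[of "\<lambda>x. \<phi> x * tw Q a b x"] by simp
    also have "\<dots> = (\<integral>u. \<phi> (Q u) * w u \<partial>UI)"
      unfolding w_def by (rule tail_weight[OF mono ab Qm \<phi>m int\<phi>Q])
    finally show ?thesis .
  qed
  have nu_eq: "nu M X p = (\<integral>x. \<phi> (X x) \<partial>M) powr (1 / p)"
    unfolding nu_def \<phi>_def \<mu>_def ..
  have bnd: "(\<integral>x. \<bar>X x - (\<integral>y. X y \<partial>M)\<bar> powr p * Z' x \<partial>M) powr (1 / p) \<le> nu M X p"
    if Z'm: "Z' \<in> borel_measurable M" and Z'1: "\<forall>x\<in>space M. 0 \<le> Z' x \<and> Z' x \<le> 1" for Z'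
  proof -
    have "(\<integral>x. \<phi> (X x) * Z' x \<partial>M) \<le> (\<integral>x. \<phi> (X x) \<partial>M)"
    proof (rule integral_mono)
      show "integrable M (\<lambda>x. \<phi> (X x) * Z' x)"
        apply (rule Bochner_Integration.integrable_bound[OF int\<phi>X])
        subgoal using Z'm by measurable
        using Z'1 \<phi>0 by (auto intro!: AE_I2 mult_left_le simp: abs_mult)
      show "\<phi> (X x) * Z' x \<le> \<phi> (X x)" if "x \<in> space M" for x
        using Z'1 \<phi>0 that by (auto intro: mult_left_le)
    qed (rule int\<phi>X)
    moreover have "0 \<le> (\<integral>x. \<phi> (X x) * Z' x \<partial>M)"
      using Z'1 \<phi>0 by (intro Bochner_Integration.integral_nonneg) auto
    ultimately show ?thesis unfolding nu_eq unfolding \<phi>_def \<mu>_def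
      using p by (intro powr_mono2) auto
  qed
  have TR: "T \<le> nu M X p * rho M X p \<xi>"
  proof (cases "nu M X p = 0")
    case True
    have "T \<le> nu M X p"
      unfolding T_def E\<phi>Z[symmetric] using bnd[OF Zm] Z01 unfolding \<phi>_def \<mu>_def by auto
    then show ?thesis using True T0 by (simp add: rho_def)
  next
    case False
    then have nup: "nu M X p > 0" unfolding nu_def by simp
    define S where "S = {(\<integral>x. \<bar>X x - (\<integral>y. X y \<partial>M)\<bar> powr p * Z x \<partial>M) powr (1 / p) / nu M X p | Z.
            Z \<in> borel_measurable M \<and> (\<forall>x\<in>space M. 0 \<le> Z x \<and> Z x \<le> 1) \<and>
            (\<integral>x. Z x \<partial>M) \<le> \<xi>}"
    have rho: "rho M X p \<xi> = Sup S" unfolding rho_def S_def using False by simp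
    have inS: "T / nu M X p \<in> S"
      unfolding S_def T_def E\<phi>Z[symmetric] using Zm Z01 EZ unfolding \<phi>_def \<mu>_def by auto
    have bdd: "bdd_above S"
    proof (rule bdd_aboveI)
      fix e assume "e \<in> S"
      then obtain Z' where e: "e = (\<integral>x. \<bar>X x - (\<integral>y. X y \<partial>M)\<bar> powr p * Z' x \<partial>M) powr (1 / p) / nu M X p"
        and Z': "Z' \<in> borel_measurable M" "\<forall>x\<in>space M. 0 \<le> Z' x \<and> Z' x \<le> 1"
        unfolding S_def by auto
      show "e \<le> 1" unfolding e using bnd[OF Z'] nup by simp
    qed
    have "T / nu M X p \<le> rho M X p \<xi>" unfolding rho by (rule cSup_upper[OF inS bdd])
    then show ?thesis using nup by (simp add: field_simps)
  qed
  have "(b - a) * \<bar>\<mu> - mab\<bar> \<le> nu M X p * rho M X p \<xi> * \<xi> powr ((p - 1) / p)"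
    using hold TR by (meson mult_right_mono order_trans powr_ge_zero)
  then have "\<bar>\<mu> - mab\<bar> \<le> nu M X p * rho M X p \<xi> * \<xi> powr ((p - 1) / p) / (b - a)"
    using ab by (simp add: field_simps)
  then show ?thesis unfolding \<mu>_def mab_def \<xi>_def by simp
qed


end
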